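(* For every positive integer $t$, every finite induced subgraph of $W'_t$ is triangle-free.
   Context: Construction of $G'_t$, $T'_t$, $W'_t$: build a countably infinite trigraph $G'_t$ (vertex set with two disjoint sets of edges, black and red; its total graph $\mathcal T(G'_t)$ uses all edges) and a rooted tree $T'_t$ on the same vertex set, partitioned into finite layers $L_0,L_1,\dots$ each inducing a left-to-right path of black edges. $L_0$ is a single vertex, the root. With $L_{\le i}=L_0\cup\dots\cup L_i$, layer $L_{i+1}$ is built (starting empty) as follows: for each $u\in L_i$ from left to right, let $N^\uparrow[u]:=(N_{\mathcal T(G'_t)}(u)\cap L_{\le i-1})\cup\{u\}$ and let $\mathcal B$ be the set of subsets of $N^\uparrow[u]$ in which every pair of distinct vertices is joined by a red edge of $G'_t$ (monochromatic red cliques). For every ordered pair $(B,R)$ of disjoint subsets of $N^\uparrow[u]$ with $B\in\mathcal B$ and $|B\cup R|\le t$: append a new vertex $v_{B,R}$ at the right end of $L_{i+1}$, joined by a black edge to the previously rightmost vertex of $L_{i+1}$ (if any), make it a child of $u$ in $T'_t$, add black edges from $v_{B,R}$ to all of $B$ and red edges to all of $R$; then append a further new vertex $v'_{B,R}$ at the right end of $L_{i+1}$, joined by a black edge to the previously rightmost vertex of $L_{i+1}$, and make it a child of $u$ in $T'_t$ (with no other edges). $W'_t$ is the graph on $V(G'_t)$ whose edges are the black edges of $G'_t$. *)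

theory Defs
  imports Main
begin

(* Vertices of G'_t are natural numbers (fresh identifiers); the root is 0.
   Edge sets are symmetric relations on nat. *)

type_synonym edges = "(nat \<times> nat) set"

definition add_edge :: "edges \<Rightarrow> nat \<Rightarrow> nat \<Rightarrow> edges" where
  "add_edge E a b = insert (a, b) (insert (b, a) E)"

definition star_edges :: "nat \<Rightarrow> nat set \<Rightarrow> edges" where
  "star_edges v X = {(v, x) | x. x \<in> X} \<union> {(x, v) | x. x \<in> X}"

(* State while building layer L_(i+1):
   (current list of L_(i+1), black edges, red edges, next fresh identifier) *)
type_synonym bstate = "nat list \<times> edges \<times> edges \<times> nat"

(* Processing one pair (B,R): append v_{B,R} and v'_{B,R}. *)
fun pair_step :: "nat set \<times> nat set \<Rightarrow> bstate \<Rightarrow> bstate" where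
  "pair_step (B, R) (L, Bl, Rd, n) =
     (let Bl1 = (if L = [] then Bl else add_edge Bl (last L) n);
          Bl2 = Bl1 \<union> star_edges n B;
          Rd2 = Rd \<union> star_edges n R;
          Bl3 = add_edge Bl2 n (Suc n)
      in (L @ [n, Suc n], Bl3, Rd2, n + 2))"

definition Nup :: "nat set \<Rightarrow> edges \<Rightarrow> edges \<Rightarrow> nat \<Rightarrow> nat set" where
  "Nup Lprev Bl Rd u = {w. ((u, w) \<in> Bl \<or> (u, w) \<in> Rd) \<and> w \<in> Lprev} \<union> {u}"

definition red_clique :: "edges \<Rightarrow> nat set \<Rightarrow> bool" where
  "red_clique Rd B \<longleftrightarrow> (\<forall>x\<in>B. \<forall>y\<in>B. x \<noteq> y \<longrightarrow> (x, y) \<in> Rd)"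

definition admissible_pairs :: "nat \<Rightarrow> edges \<Rightarrow> nat set \<Rightarrow> (nat set \<times> nat set) set" where
  "admissible_pairs t Rd N =
     {(B, R). B \<subseteq> N \<and> R \<subseteq> N \<and> B \<inter> R = {} \<and> red_clique Rd B \<and> card (B \<union> R) \<le> t}"

(* enum u P lists the pairs of P in the (unspecified) order in which they are processed for u *)
fun u_step :: "(nat \<Rightarrow> (nat set \<times> nat set) set \<Rightarrow> (nat set \<times> nat set) list) \<Rightarrow> nat
                 \<Rightarrow> nat set \<Rightarrow> nat \<Rightarrow> bstate \<Rightarrow> bstate" where
  "u_step enum t Lprev u (L, Bl, Rd, n) =
     fold pair_step (enum u (admissible_pairs t Rd (Nup Lprev Bl Rd u))) (L, Bl, Rd, n)"

(* build i = (layers [L_0,...,L_i], black edges, red edges, next fresh identifier) *)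
fun build :: "(nat \<Rightarrow> (nat set \<times> nat set) set \<Rightarrow> (nat set \<times> nat set) list) \<Rightarrow> nat \<Rightarrow> nat
               \<Rightarrow> nat list list \<times> edges \<times> edges \<times> nat" where
  "build enum t 0 = ([[0]], {}, {}, 1)"
| "build enum t (Suc i) =
     (case build enum t i of (Ls, Bl, Rd, n) \<Rightarrow>
        (let Lprev = \<Union> (set ` set (take i Ls));
             Li = Ls ! i
         in (case fold (u_step enum t Lprev) Li ([], Bl, Rd, n) of
               (Lnew, Bl', Rd', n') \<Rightarrow> (Ls @ [Lnew], Bl', Rd', n'))))"

definition Gt_vertices :: "(nat \<Rightarrow> (nat set \<times> nat set) set \<Rightarrow> (nat set \<times> nat set) list) \<Rightarrow> nat \<Rightarrow> nat set" where
  "Gt_vertices enum t = (\<Union>i. \<Union> (set ` set (fst (build enum t i))))"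

(* edges of W'_t = black edges of G'_t *)
definition Wt_edges :: "(nat \<Rightarrow> (nat set \<times> nat set) set \<Rightarrow> (nat set \<times> nat set) list) \<Rightarrow> nat \<Rightarrow> edges" where
  "Wt_edges enum t = (\<Union>i. fst (snd (build enum t i)))"

definition induced_edges :: "nat set \<Rightarrow> edges \<Rightarrow> edges" where
  "induced_edges S E = {(a, b). (a, b) \<in> E \<and> a \<in> S \<and> b \<in> S}"

definition triangle_free :: "nat set \<Rightarrow> edges \<Rightarrow> bool" where
  "triangle_free V E \<longleftrightarrow>
     \<not> (\<exists>a b c. a \<in> V \<and> b \<in> V \<and> c \<in> V \<and> a \<noteq> b \<and> b \<noteq> c \<and> a \<noteq> c \<and>
              (a, b) \<in> E \<and> (b, c) \<in> E \<and> (a, c) \<in> E)"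

end

theory Submission
  imports Defs
begin

definition tf :: "edges \<Rightarrow> bool" where
  "tf E \<longleftrightarrow> (\<forall>v x y. x < v \<longrightarrow> y < v \<longrightarrow> x \<noteq> y \<longrightarrow> (v,x) \<in> E \<longrightarrow> (v,y) \<in> E \<longrightarrow> (x,y) \<in> E \<longrightarrow> False)"

definition inv_l :: "nat \<Rightarrow> edges \<Rightarrow> edges \<Rightarrow> bstate \<Rightarrow> bool" where
  "inv_l n0 Bl0 Rd0 s \<longleftrightarrow> (case s of (L,Bl,Rd,n) \<Rightarrow> n0 \<le> n \<and> Bl \<subseteq> {..<n}\<times>{..<n} \<and> Rd \<subseteq> {..<n}\<times>{..<n}
     \<and> sym Bl \<and> Bl \<inter> Rd = {} \<and> tf Bl \<and> set L \<subseteq> {..<n}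
     \<and> (L \<noteq> [] \<longrightarrow> last L = n-1 \<and> n0+2 \<le> n \<and> (\<forall>y. (n-1,y) \<in> Bl \<longrightarrow> y = n-2))
     \<and> Bl0 \<subseteq> Bl \<and> Rd0 \<subseteq> Rd)"

lemma tf_triangle:
  assumes "sym E" "tf E" "(a,b) \<in> E" "(b,c) \<in> E" "(a,c) \<in> E" "a \<noteq> b" "b \<noteq> c" "a \<noteq> c"
  shows False
proof -
  have s: "\<And>x y. (x,y) \<in> E \<Longrightarrow> (y,x) \<in> E" using assms(1) by (meson symD)
  have T: "\<And>v x y. x < v \<Longrightarrow> y < v \<Longrightarrow> x \<noteq> y \<Longrightarrow> (v,x) \<in> E \<Longrightarrow> (v,y) \<in> E \<Longrightarrow> (x,y) \<in> E \<Longrightarrow> False"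
    using assms(2) unfolding tf_def by blast
  have "a < b \<or> b < a" "b < c \<or> c < b" "a < c \<or> c < a" using assms by auto
  then show False using T s assms(3-8) by (metis order.strict_trans)
qed

lemma pair_step_inv:
  assumes I: "inv_l n0 Bl0 Rd0 (L,Bl,Rd,n)" and B: "B \<subseteq> {..<n0}" and R: "R \<subseteq> {..<n0}"
    and BR: "B \<inter> R = {}" and rc: "red_clique Rd B"
  shows "inv_l n0 Bl0 Rd0 (pair_step (B,R) (L,Bl,Rd,n))"
proof -
  define Blf where "Blf = add_edge ((if L = [] then Bl else add_edge Bl (last L) n) \<union> star_edges n B) n (Suc n)"
  define Rdf where "Rdf = Rd \<union> star_edges n R"
  have eq: "pair_step (B,R) (L,Bl,Rd,n) = (L @ [n, Suc n], Blf, Rdf, n+2)"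
    by (simp add: Blf_def Rdf_def Let_def)
  have char: "(x,y) \<in> Blf \<longleftrightarrow> (x,y) \<in> Bl \<or> (L\<noteq>[] \<and> ((x,y) = (last L, n) \<or> (x,y) = (n, last L)))
     \<or> (x = n \<and> y \<in> B) \<or> (y = n \<and> x \<in> B) \<or> (x,y) = (n,Suc n) \<or> (x,y) = (Suc n, n)" for x y
    by (auto simp: Blf_def add_edge_def star_edges_def)
  have charR: "(x,y) \<in> Rdf \<longleftrightarrow> (x,y) \<in> Rd \<or> (x = n \<and> y \<in> R) \<or> (y = n \<and> x \<in> R)" for x y
    by (auto simp: Rdf_def star_edges_def)
  from I have n0n: "n0 \<le> n" and Blb: "Bl \<subseteq> {..<n}\<times>{..<n}" and Rdb: "Rd \<subseteq> {..<n}\<times>{..<n}"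
    and sy: "sym Bl" and dj: "Bl \<inter> Rd = {}" and tfB: "tf Bl" and Lb: "set L \<subseteq> {..<n}"
    and La: "L \<noteq> [] \<longrightarrow> last L = n-1 \<and> n0+2 \<le> n \<and> (\<forall>y. (n-1,y) \<in> Bl \<longrightarrow> y = n-2)"
    and m1: "Bl0 \<subseteq> Bl" and m2: "Rd0 \<subseteq> Rd"
    unfolding inv_l_def by auto
  have Blb': "(x,y) \<in> Bl \<Longrightarrow> x < n \<and> y < n" for x y using Blb by auto
  have Rdb': "(x,y) \<in> Rd \<Longrightarrow> x < n \<and> y < n" for x y using Rdb by auto
  have lastb: "L \<noteq> [] \<Longrightarrow> last L < n" using Lb last_in_set by blast
  have Bb: "x \<in> B \<Longrightarrow> x < n0" for x using B by auto
  have Rb: "x \<in> R \<Longrightarrow> x < n0" for x using R by auto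
  have syB: "(x,y) \<in> Bl \<Longrightarrow> (y,x) \<in> Bl" for x y using sy by (meson symD)
  have T: "\<And>v x y. x < v \<Longrightarrow> y < v \<Longrightarrow> x \<noteq> y \<Longrightarrow> (v,x) \<in> Bl \<Longrightarrow> (v,y) \<in> Bl \<Longrightarrow> (x,y) \<in> Bl \<Longrightarrow> False"
    using tfB unfolding tf_def by blast
  have rc': "x \<in> B \<Longrightarrow> y \<in> B \<Longrightarrow> x \<noteq> y \<Longrightarrow> (x,y) \<in> Rd" for x y using rc unfolding red_clique_def by blast
  have c1: "Blf \<subseteq> {..<n+2}\<times>{..<n+2}"
  proof
    fix p assume "p \<in> Blf" then obtain x y where p: "p = (x,y)" "(x,y) \<in> Blf" by (cases p) auto
    then show "p \<in> {..<n+2}\<times>{..<n+2}" unfolding char using Blb' lastb Bb n0n by fastforce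
  qed
  have c2: "Rdf \<subseteq> {..<n+2}\<times>{..<n+2}"
  proof
    fix p assume "p \<in> Rdf" then obtain x y where p: "p = (x,y)" "(x,y) \<in> Rdf" by (cases p) auto
    then show "p \<in> {..<n+2}\<times>{..<n+2}" unfolding charR using Rdb' Rb n0n by fastforce
  qed
  have c3: "sym Blf" unfolding sym_def using char syB by blast
  have c4: "Blf \<inter> Rdf = {}"
  proof (rule ccontr)
    assume "Blf \<inter> Rdf \<noteq> {}"
    then obtain x y where a: "(x,y) \<in> Blf" "(x,y) \<in> Rdf" by auto
    show False using a[unfolded char charR] dj Blb' Rdb' lastb Bb Rb n0n La BR by fastforce
  qed
  have c5: "tf Blf" unfolding tf_def
  proof (intro allI impI)
    fix v x y assume xv: "x < v" and yv: "y < v" and xy: "x \<noteq> y" and e1: "(v,x) \<in> Blf"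
      and e2: "(v,y) \<in> Blf" and e3: "(x,y) \<in> Blf"
    consider "v < n" | "v = n" | "v = Suc n" | "v > Suc n" by linarith
    then show False
    proof cases
      case 1
      then have "(v,x) \<in> Bl" "(v,y) \<in> Bl" "(x,y) \<in> Bl" using e1 e2 e3 xv yv Bb n0n lastb
        unfolding char by auto
      then show False using T xv yv xy by blast
    next
      case 2
      have ex: "(L \<noteq> [] \<and> x = last L) \<or> x \<in> B" using e1 xv 2 Blb' unfolding char by auto
      have ey: "(L \<noteq> [] \<and> y = last L) \<or> y \<in> B" using e2 yv 2 Blb' unfolding char by auto
      have exy: "(x,y) \<in> Bl" using e3 xv yv 2 Bb n0n lastb unfolding char by auto
      show False
      proof (cases "x \<in> B \<and> y \<in> B")
        case True then show False using rc' xy exy dj by blast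
      next
        case False
        then have "L \<noteq> []" "(last L = x \<and> y \<in> B) \<or> (last L = y \<and> x \<in> B)" using ex ey xy by auto
        then show False using La exy syB Bb by fastforce
      qed
    next
      case 3
      have "x = n" using e1 xv 3 Bb n0n unfolding char by (auto dest: Blb')
      moreover have "y = n" using e2 yv 3 Bb n0n unfolding char by (auto dest: Blb')
      ultimately show False using xy by simp
    next
      case 4
      then show False using e1 Bb n0n lastb unfolding char by (force dest: Blb' Bb)
    qed
  qed
  have c6: "\<forall>y. (Suc n, y) \<in> Blf \<longrightarrow> y = n" using Bb n0n unfolding char by (auto dest: Blb')
  have c7: "Bl0 \<subseteq> Blf" using m1 char by auto
  have c8: "Rd0 \<subseteq> Rdf" using m2 charR by auto
  show ?thesis unfolding eq inv_l_def using c1 c2 c3 c4 c5 c6 c7 c8 n0n Lb by auto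
qed


lemma inv_l_weaken: "inv_l n0 Bl0 Rd1 s \<Longrightarrow> Rd0 \<subseteq> Rd1 \<Longrightarrow> inv_l n0 Bl0 Rd0 s"
  unfolding inv_l_def by (auto split: prod.splits)

lemma fold_pair_inv:
  "\<forall>p\<in>set ps. fst p \<subseteq> {..<n0} \<and> snd p \<subseteq> {..<n0} \<and> fst p \<inter> snd p = {} \<and> red_clique Rd0 (fst p)
   \<Longrightarrow> inv_l n0 Bl0 Rd0 s \<Longrightarrow> inv_l n0 Bl0 Rd0 (fold pair_step ps s)"
proof (induction ps arbitrary: s)
  case Nil then show ?case by simp
next
  case (Cons p ps)
  obtain B R where p: "p = (B,R)" by (cases p)
  obtain L Bl Rd n where s: "s = (L,Bl,Rd,n)" by (cases s) auto
  have "Rd0 \<subseteq> Rd" using Cons.prems(2) s unfolding inv_l_def by auto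
  then have rc: "red_clique Rd B" using Cons.prems(1) p unfolding red_clique_def by auto
  have "inv_l n0 Bl0 Rd0 (pair_step p s)"
    using pair_step_inv[of n0 Bl0 Rd0 L Bl Rd n B R] Cons.prems p s rc by auto
  then show ?case using Cons.IH Cons.prems(1) by simp
qed

lemma u_step_inv:
  assumes enum_ok: "\<And>u P. finite P \<Longrightarrow> set (enum u P) = P \<and> distinct (enum u P)"
    and "u < n0" "Lprev \<subseteq> {..<n0}" "inv_l n0 Bl0 Rd0 s"
  shows "inv_l n0 Bl0 Rd0 (u_step enum t Lprev u s)"
proof -
  obtain L Bl Rd n where s: "s = (L,Bl,Rd,n)" by (cases s) auto
  define P where "P = admissible_pairs t Rd (Nup Lprev Bl Rd u)"
  have N: "Nup Lprev Bl Rd u \<subseteq> {..<n0}" using assms(2,3) unfolding Nup_def by auto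
  have Psub: "P \<subseteq> Pow {..<n0} \<times> Pow {..<n0}" using N unfolding P_def admissible_pairs_def by auto
  have fin: "finite P" by (rule finite_subset[OF Psub]) auto
  have inv0: "inv_l n0 Bl0 Rd s" using assms(4) s unfolding inv_l_def by auto
  have good: "\<forall>p\<in>P. fst p \<subseteq> {..<n0} \<and> snd p \<subseteq> {..<n0} \<and> fst p \<inter> snd p = {} \<and> red_clique Rd (fst p)"
    using N unfolding P_def admissible_pairs_def by auto
  have r: "inv_l n0 Bl0 Rd (fold pair_step (enum u P) s)"
    by (rule fold_pair_inv) (use good inv0 enum_ok fin in auto)
  have "Rd0 \<subseteq> Rd" using assms(4) s unfolding inv_l_def by auto
  then show ?thesis using inv_l_weaken[OF r] s P_def by simp
qed


lemma fold_u_inv: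
  assumes enum_ok: "\<And>u P. finite P \<Longrightarrow> set (enum u P) = P \<and> distinct (enum u P)"
  shows "\<forall>u\<in>set us. u < n0 \<Longrightarrow> Lprev \<subseteq> {..<n0} \<Longrightarrow> inv_l n0 Bl0 Rd0 s
    \<Longrightarrow> inv_l n0 Bl0 Rd0 (fold (u_step enum t Lprev) us s)"
proof (induction us arbitrary: s)
  case Nil then show ?case by simp
next
  case (Cons u us)
  then show ?case using u_step_inv[where enum=enum, OF enum_ok] by simp
qed

definition ginv :: "nat \<Rightarrow> nat list list \<times> edges \<times> edges \<times> nat \<Rightarrow> bool" where
  "ginv i b \<longleftrightarrow> (case b of (Ls,Bl,Rd,n) \<Rightarrow> length Ls = Suc i \<and> (\<forall>l\<in>set Ls. set l \<subseteq> {..<n})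
     \<and> Bl \<subseteq> {..<n}\<times>{..<n} \<and> Rd \<subseteq> {..<n}\<times>{..<n} \<and> sym Bl \<and> Bl \<inter> Rd = {} \<and> tf Bl)"

lemma build_step:
  assumes enum_ok: "\<And>u P. finite P \<Longrightarrow> set (enum u P) = P \<and> distinct (enum u P)"
    and g: "ginv i (build enum t i)"
  shows "ginv (Suc i) (build enum t (Suc i)) \<and> fst (snd (build enum t i)) \<subseteq> fst (snd (build enum t (Suc i)))"
proof -
  obtain Ls Bl Rd n where b: "build enum t i = (Ls,Bl,Rd,n)" by (cases "build enum t i") auto
  define Lprev where "Lprev = \<Union> (set ` set (take i Ls))"
  define Li where "Li = Ls ! i"
  obtain Lnew Bl' Rd' n' where f: "fold (u_step enum t Lprev) Li ([], Bl, Rd, n) = (Lnew, Bl', Rd', n')"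
    by (cases "fold (u_step enum t Lprev) Li ([], Bl, Rd, n)") auto
  have bs: "build enum t (Suc i) = (Ls @ [Lnew], Bl', Rd', n')"
    using b f by (simp add: Lprev_def Li_def)
  from g b have len: "length Ls = Suc i" and Lsb: "\<forall>l\<in>set Ls. set l \<subseteq> {..<n}"
    and Blb: "Bl \<subseteq> {..<n}\<times>{..<n}" and Rdb: "Rd \<subseteq> {..<n}\<times>{..<n}" and sy: "sym Bl"
    and dj: "Bl \<inter> Rd = {}" and tfB: "tf Bl" unfolding ginv_def by auto
  have LiS: "Li \<in> set Ls" using len unfolding Li_def by simp
  have Lp: "Lprev \<subseteq> {..<n}" using Lsb unfolding Lprev_def by (auto dest: in_set_takeD)
  have us: "\<forall>u\<in>set Li. u < n" using Lsb LiS by auto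
  have i0: "inv_l n Bl Rd ([], Bl, Rd, n)" using Blb Rdb sy dj tfB unfolding inv_l_def by auto
  have "inv_l n Bl Rd (Lnew, Bl', Rd', n')"
    using fold_u_inv[where enum=enum and t=t, OF enum_ok us Lp i0] f by simp
  then have "n \<le> n'" "set Lnew \<subseteq> {..<n'}" "Bl' \<subseteq> {..<n'}\<times>{..<n'}" "Rd' \<subseteq> {..<n'}\<times>{..<n'}"
    "sym Bl'" "Bl' \<inter> Rd' = {}" "tf Bl'" "Bl \<subseteq> Bl'" unfolding inv_l_def by auto
  then show ?thesis using bs b len Lsb unfolding ginv_def by fastforce
qed

lemma build_ginv:
  assumes enum_ok: "\<And>u P. finite P \<Longrightarrow> set (enum u P) = P \<and> distinct (enum u P)"
  shows "ginv i (build enum t i)"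
proof (induction i)
  case 0 then show ?case unfolding ginv_def tf_def sym_def by simp
next
  case (Suc i) then show ?case using build_step[where enum=enum, OF enum_ok] by blast
qed

theorem mainTheorem14:
  fixes enum :: "nat \<Rightarrow> (nat set \<times> nat set) set \<Rightarrow> (nat set \<times> nat set) list"
    and t :: nat and S :: "nat set"
  assumes enum_ok: "\<And>u P. finite P \<Longrightarrow> set (enum u P) = P \<and> distinct (enum u P)"
    and "t \<ge> 1"
    and "finite S" and "S \<subseteq> Gt_vertices enum t"
  shows "triangle_free S (induced_edges S (Wt_edges enum t))"
proof -
  define E where "E = (\<lambda>i. fst (snd (build enum t i)))"
  have mono1: "E i \<subseteq> E (Suc i)" for i
    using build_step[where enum=enum, OF enum_ok build_ginv[where enum=enum, OF enum_ok]] unfolding E_def by blast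
  have mono: "i \<le> j \<Longrightarrow> E i \<subseteq> E j" for i j
    by (rule lift_Suc_mono_le[of E, OF mono1])
  have props: "sym (E i) \<and> tf (E i)" for i
    using build_ginv[where enum=enum, OF enum_ok, of i t] unfolding E_def ginv_def by (auto split: prod.splits)
  show ?thesis unfolding triangle_free_def
  proof (intro notI, elim exE conjE)
    fix a b c assume ab: "a \<noteq> b" and bc: "b \<noteq> c" and ac: "a \<noteq> c"
      and e1: "(a,b) \<in> induced_edges S (Wt_edges enum t)" and e2: "(b,c) \<in> induced_edges S (Wt_edges enum t)"
      and e3: "(a,c) \<in> induced_edges S (Wt_edges enum t)"
    obtain i j k where "(a,b) \<in> E i" "(b,c) \<in> E j" "(a,c) \<in> E k"
      using e1 e2 e3 unfolding induced_edges_def Wt_edges_def E_def by auto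
    then have "(a,b) \<in> E (max i (max j k))" "(b,c) \<in> E (max i (max j k))" "(a,c) \<in> E (max i (max j k))"
      using mono[of i "max i (max j k)"] mono[of j "max i (max j k)"] mono[of k "max i (max j k)"]
      by (auto simp: le_max_iff_disj)
    then show False using tf_triangle props ab bc ac by blast
  qed
qed

end
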